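(* Let $p$ be a prime, let $A\in \mathbb{Z}^{m\times n}$ be a matrix all of whose (square) subdeterminants belong to $\{0\}\cup \{\pm p^k:k\in \mathbb{Z}_{\ge 0}\}$, and let $b\in \mathbb{Z}^m$. Then $Ax\leq b$ is totally dual $p$-adic.
   Context: A $p$-adic rational is a number $a/p^k$ with $a,k\in\mathbb{Z}$, $k\ge0$; a vector is $p$-adic if all entries are $p$-adic rationals. A system $Ax\le b$ with integral $A,b$ is totally dual $p$-adic if for every $w\in\mathbb{Z}^n$ for which $\min\{b^\top y: A^\top y=w,\ y\ge \mathbf{0}\}$ has an optimal solution, it has a $p$-adic optimal solution. *)

theory Defs
  imports "Jordan_Normal_Form.Determinant" "Jordan_Normal_Form.DL_Submatrix"
begin

definition p_adic :: "int \<Rightarrow> real \<Rightarrow> bool" where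
  "p_adic p x \<longleftrightarrow> (\<exists>(a::int) (k::nat). x = real_of_int a / real_of_int p ^ k)"

definition p_adic_vec :: "int \<Rightarrow> real vec \<Rightarrow> bool" where
  "p_adic_vec p y \<longleftrightarrow> (\<forall>i < dim_vec y. p_adic p (y $ i))"

definition subdets_p_power :: "int \<Rightarrow> int mat \<Rightarrow> bool" where
  "subdets_p_power p A \<longleftrightarrow>
     (\<forall>I J. I \<subseteq> {0..<dim_row A} \<longrightarrow> J \<subseteq> {0..<dim_col A} \<longrightarrow> card I = card J \<longrightarrow>
        (let d = det (submatrix A I J) in d = 0 \<or> (\<exists>k::nat. d = p ^ k \<or> d = - (p ^ k))))"

definition dual_feasible :: "int mat \<Rightarrow> int vec \<Rightarrow> real vec \<Rightarrow> bool" where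
  "dual_feasible A w y \<longleftrightarrow>
     y \<in> carrier_vec (dim_row A) \<and> (\<forall>i < dim_row A. y $ i \<ge> 0) \<and>
     transpose_mat (map_mat real_of_int A) *\<^sub>v y = map_vec real_of_int w"

definition dual_optimal :: "int mat \<Rightarrow> int vec \<Rightarrow> int vec \<Rightarrow> real vec \<Rightarrow> bool" where
  "dual_optimal A b w y \<longleftrightarrow>
     dual_feasible A w y \<and>
     (\<forall>y'. dual_feasible A w y' \<longrightarrow> map_vec real_of_int b \<bullet> y \<le> map_vec real_of_int b \<bullet> y')"

definition totally_dual_p_adic :: "int \<Rightarrow> int mat \<Rightarrow> int vec \<Rightarrow> bool" where
  "totally_dual_p_adic p A b \<longleftrightarrow>
     (\<forall>w \<in> carrier_vec (dim_col A).
        (\<exists>y. dual_optimal A b w y) \<longrightarrow> (\<exists>y. dual_optimal A b w y \<and> p_adic_vec p y))"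

end

theory Submission
  imports Defs
begin

lemma sum_pick:
  assumes "finite J"
  shows "(\<Sum>r<card J. g (pick J r)) = (\<Sum>j\<in>J. g j)"
proof -
  have inj: "inj_on (pick J) {..<card J}"
  proof (rule inj_onI)
    fix x y assume "x \<in> {..<card J}" "y \<in> {..<card J}" "pick J x = pick J y"
    then show "x = y" using pick_mono[of _ J] by (metis lessThan_iff nat_neq_iff less_irrefl)
  qed
  have sub: "pick J ` {..<card J} \<subseteq> J" using pick_in_set by auto
  have "card (pick J ` {..<card J}) = card J" using card_image[OF inj] by simp
  then have "pick J ` {..<card J} = J" using card_subset_eq[OF assms sub] by simp
  then have "bij_betw (pick J) {..<card J} J" using inj by (simp add: bij_betw_def)
  then show ?thesis by (rule sum.reindex_bij_betw)
qed

lemma exists_kernel: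
  fixes f :: "'e \<Rightarrow> 'x \<Rightarrow> real"
  assumes "finite E" "finite X" "card E < card X"
  shows "\<exists>v. (\<forall>e\<in>E. (\<Sum>x\<in>X. f e x * v x) = 0) \<and> (\<exists>x\<in>X. v x \<noteq> 0)"
  using assms
proof (induction E arbitrary: X f rule: finite_induct)
  case empty
  then obtain x0 where "x0 \<in> X" by fastforce
  then show ?case by (intro exI[of _ "\<lambda>x. if x = x0 then 1 else 0"]) auto
next
  case (insert e E)
  show ?case
  proof (cases "\<forall>x\<in>X. f e x = 0")
    case True
    from insert have "card E < card X" by simp
    from insert.IH[OF insert.prems(1) this, of f] obtain v where
      v: "\<forall>e\<in>E. (\<Sum>x\<in>X. f e x * v x) = 0" "\<exists>x\<in>X. v x \<noteq> 0" by blast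
    show ?thesis using v True by (intro exI[of _ v]) auto
  next
    case False
    then obtain x0 where x0: "x0 \<in> X" "f e x0 \<noteq> 0" by blast
    define X' where "X' = X - {x0}"
    have fX': "finite X'" using insert.prems X'_def by auto
    have cX': "card E < card X'" using insert x0 X'_def by (simp add: card_Diff_singleton)
    define g where "g = (\<lambda>e' x. f e' x - f e' x0 * f e x / f e x0)"
    from insert.IH[OF fX' cX', of g] obtain v' where
      v': "\<forall>e'\<in>E. (\<Sum>x\<in>X'. g e' x * v' x) = 0" "\<exists>x\<in>X'. v' x \<noteq> 0" by blast
    define v where "v = (\<lambda>x. if x = x0 then - (\<Sum>x\<in>X'. f e x * v' x) / f e x0 else v' x)"
    have split: "(\<Sum>x\<in>X. h x * v x) = h x0 * v x0 + (\<Sum>x\<in>X'. h x * v' x)" for h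
    proof -
      have "(\<Sum>x\<in>X. h x * v x) = h x0 * v x0 + (\<Sum>x\<in>X'. h x * v x)"
        unfolding X'_def using insert.prems x0 by (simp add: sum.remove)
      also have "(\<Sum>x\<in>X'. h x * v x) = (\<Sum>x\<in>X'. h x * v' x)"
        by (rule sum.cong) (auto simp: v_def X'_def)
      finally show ?thesis .
    qed
    have "\<forall>e'\<in>insert e E. (\<Sum>x\<in>X. f e' x * v x) = 0"
    proof
      fix e' assume "e' \<in> insert e E"
      then consider "e' = e" | "e' \<in> E" by blast
      then show "(\<Sum>x\<in>X. f e' x * v x) = 0"
      proof cases
        case 1
        then show ?thesis unfolding split using x0 by (simp add: v_def)
      next
        case 2
        have "0 = (\<Sum>x\<in>X'. g e' x * v' x)" using v' 2 by simp
        also have "\<dots> = (\<Sum>x\<in>X'. f e' x * v' x) - f e' x0 / f e x0 * (\<Sum>x\<in>X'. f e x * v' x)"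
        proof -
          have "(\<Sum>x\<in>X'. g e' x * v' x) = (\<Sum>x\<in>X'. f e' x * v' x - f e' x0 / f e x0 * (f e x * v' x))"
            by (rule sum.cong) (auto simp: g_def algebra_simps)
          then show ?thesis by (simp add: sum_subtractf sum_distrib_left)
        qed
        finally have "(\<Sum>x\<in>X'. f e' x * v' x) = f e' x0 / f e x0 * (\<Sum>x\<in>X'. f e x * v' x)" by simp
        then show ?thesis unfolding split using x0 by (simp add: v_def)
      qed
    qed
    moreover have "\<exists>x\<in>X. v x \<noteq> 0" using v' by (auto simp: v_def X'_def)
    ultimately show ?thesis by blast
  qed
qed

lemma find_J:
  fixes a :: "nat \<Rightarrow> nat \<Rightarrow> real"
  assumes fS: "finite S" and fC: "finite C"
    and indep: "\<forall>u. (\<forall>j\<in>C. (\<Sum>i\<in>S. u i * a i j) = 0) \<longrightarrow> (\<forall>i\<in>S. u i = 0)"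
  shows "\<exists>J\<subseteq>C. card J = card S \<and> (\<forall>v. (\<forall>i\<in>S. (\<Sum>j\<in>J. a i j * v j) = 0) \<longrightarrow> (\<forall>j\<in>J. v j = 0))"
proof -
  define Q where "Q = (\<lambda>J. J \<subseteq> C \<and> (\<forall>v. (\<forall>i\<in>S. (\<Sum>j\<in>J. a i j * v j) = 0) \<longrightarrow> (\<forall>j\<in>J. v j = 0)))"
  have Q0: "Q {}" unfolding Q_def by auto
  have bnd: "\<forall>J. Q J \<longrightarrow> card J < card C + 1"
    unfolding Q_def using fC by (simp add: card_mono less_Suc_eq_le)
  obtain J where QJ: "Q J" and maxJ: "\<And>J'. Q J' \<Longrightarrow> card J' \<le> card J"
    using ex_has_greatest_nat[of Q "{}" card "card C + 1", OF Q0 bnd] by blast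
  have JC: "J \<subseteq> C" and Jind: "\<And>v. (\<forall>i\<in>S. (\<Sum>j\<in>J. a i j * v j) = 0) \<Longrightarrow> (\<forall>j\<in>J. v j = 0)"
    using QJ unfolding Q_def by auto
  have fJ: "finite J" using JC fC finite_subset by blast
  have le1: "card J \<le> card S"
  proof (rule ccontr)
    assume "\<not> card J \<le> card S"
    then have "card S < card J" by simp
    from exists_kernel[OF fS fJ this, of a] obtain v where
      "\<forall>i\<in>S. (\<Sum>j\<in>J. a i j * v j) = 0" "\<exists>j\<in>J. v j \<noteq> 0" by blast
    then show False using Jind by blast
  qed
  have le2: "card S \<le> card J"
  proof (rule ccontr)
    assume "\<not> card S \<le> card J"
    then have "card J < card S" by simp
    from exists_kernel[OF fJ fS this, of "\<lambda>j i. a i j"] obtain u where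
      u: "\<forall>j\<in>J. (\<Sum>i\<in>S. a i j * u i) = 0" "\<exists>i\<in>S. u i \<noteq> 0" by blast
    then obtain c where c: "c \<in> C" "(\<Sum>i\<in>S. u i * a i c) \<noteq> 0" using indep by blast
    have u': "\<forall>j\<in>J. (\<Sum>i\<in>S. u i * a i j) = 0" using u(1) by (simp add: mult.commute)
    then have cJ: "c \<notin> J" using c by blast
    have "Q (insert c J)" unfolding Q_def
    proof (intro conjI allI impI)
      show "insert c J \<subseteq> C" using c JC by auto
      fix v assume hv: "\<forall>i\<in>S. (\<Sum>j\<in>insert c J. a i j * v j) = 0"
      then have hv': "\<forall>i\<in>S. a i c * v c + (\<Sum>j\<in>J. a i j * v j) = 0" using fJ cJ by simp
      have "0 = (\<Sum>i\<in>S. u i * (a i c * v c + (\<Sum>j\<in>J. a i j * v j)))" using hv' by simp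
      also have "\<dots> = v c * (\<Sum>i\<in>S. u i * a i c) + (\<Sum>i\<in>S. \<Sum>j\<in>J. u i * (a i j * v j))"
        by (simp add: distrib_left sum.distrib sum_distrib_left sum_distrib_right mult_ac)
      also have "(\<Sum>i\<in>S. \<Sum>j\<in>J. u i * (a i j * v j)) = (\<Sum>j\<in>J. v j * (\<Sum>i\<in>S. u i * a i j))"
        by (subst sum.swap) (simp add: sum_distrib_left mult_ac)
      also have "\<dots> = 0" using u' by simp
      finally have "v c = 0" using c(2) by simp
      then have "\<forall>i\<in>S. (\<Sum>j\<in>J. a i j * v j) = 0" using hv' by simp
      then have "\<forall>j\<in>J. v j = 0" by (rule Jind)
      then show "\<forall>j\<in>insert c J. v j = 0" using \<open>v c = 0\<close> by simp
    qed
    then have "card (insert c J) \<le> card J" by (rule maxJ)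
    then show False using cJ fJ by simp
  qed
  show ?thesis using JC Jind le1 le2 by (intro exI[of _ J]) auto
qed

lemma card_less_pos:
  fixes S :: "nat set"
  assumes "finite S" "i \<in> S"
  shows "card {a\<in>S. a < i} < card S"
proof -
  have "i \<notin> {a\<in>S. a < i}" by auto
  then have "{a\<in>S. a < i} \<subset> S" using assms(2) by blast
  then show ?thesis by (rule psubset_card_mono[OF assms(1)])
qed

lemma submatrix_facts:
  assumes A: "A \<in> carrier_mat m n" and S: "S \<subseteq> {..<m}" and J: "J \<subseteq> {..<n}"
  shows "submatrix A S J \<in> carrier_mat (card S) (card J)"
    and "\<And>t r. t < card S \<Longrightarrow> r < card J \<Longrightarrow> submatrix A S J $$ (t, r) = A $$ (pick S t, pick J r)"
proof -
  have d1: "{i. i<dim_row A \<and> i\<in>S} = S" using A S by auto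
  have d2: "{i. i<dim_col A \<and> i\<in>J} = J" using A J by auto
  show "submatrix A S J \<in> carrier_mat (card S) (card J)"
    unfolding carrier_mat_def using dim_submatrix[of A S J] d1 d2 by simp
  fix t r assume "t < card S" "r < card J"
  then show "submatrix A S J $$ (t, r) = A $$ (pick S t, pick J r)"
    using submatrix_index[of t A S r J] d1 d2 by simp
qed

lemma det_nonzero:
  assumes A: "A \<in> carrier_mat m n" and S: "S \<subseteq> {..<m}" and J: "J \<subseteq> {..<n}"
    and c: "card S = card J"
    and Q: "\<forall>v. (\<forall>i\<in>S. (\<Sum>j\<in>J. real_of_int (A$$(i,j)) * v j) = 0) \<longrightarrow> (\<forall>j\<in>J. v j = 0)"
  shows "det (submatrix A S J) \<noteq> 0"
proof
  assume d0: "det (submatrix A S J) = 0"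
  define s where "s = card S"
  have fS: "finite S" using S finite_subset by blast
  have fJ: "finite J" using J finite_subset by blast
  have carr: "submatrix A S J \<in> carrier_mat s s" using submatrix_facts(1)[OF A S J] c s_def by simp
  define B where "B = map_mat real_of_int (submatrix A S J)"
  have Bc: "B \<in> carrier_mat s s" using carr B_def by simp
  have "det B = 0" unfolding B_def of_int_hom.hom_det d0 by simp
  then obtain v where v: "v \<in> carrier_vec s" "v \<noteq> 0\<^sub>v s" "B *\<^sub>v v = 0\<^sub>v s"
    using det_0_iff_vec_prod_zero_field[OF Bc] by blast
  define vf where "vf = (\<lambda>j. v $ card {a\<in>J. a < j})"
  have vfp: "vf (pick J r) = v $ r" if "r < card J" for r
    unfolding vf_def using card_pick[of r J] that by simp
  have "\<forall>i\<in>S. (\<Sum>j\<in>J. real_of_int (A$$(i,j)) * vf j) = 0"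
  proof
    fix i assume i: "i \<in> S"
    define t where "t = card {a\<in>S. a < i}"
    have t: "t < s" using card_less_pos[OF fS i] t_def s_def by simp
    have pt: "pick S t = i" using pick_card_in_set[OF i] t_def by simp
    have "0 = (B *\<^sub>v v) $ t" using v t by simp
    also have "\<dots> = (\<Sum>r\<in>{0..<s}. B $$ (t, r) * v $ r)"
      using Bc v(1) t by (simp add: scalar_prod_def)
    also have "\<dots> = (\<Sum>r<card J. real_of_int (A $$ (i, pick J r)) * vf (pick J r))"
      using submatrix_facts(2)[OF A S J] t c s_def pt vfp Bc
      by (intro sum.cong) (auto simp: B_def)
    also have "\<dots> = (\<Sum>j\<in>J. real_of_int (A$$(i,j)) * vf j)"
      by (rule sum_pick[OF fJ])
    finally show "(\<Sum>j\<in>J. real_of_int (A$$(i,j)) * vf j) = 0" by simp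
  qed
  then have "\<forall>j\<in>J. vf j = 0" using Q by blast
  then have "v = 0\<^sub>v s"
    using v(1) vfp pick_in_set[of _ J] c s_def by (intro eq_vecI) force+
  then show False using v(2) by simp
qed

lemma replace_col_map:
  assumes "dim_vec v = dim_row M"
  shows "map_mat f (replace_col M v k) = replace_col (map_mat f M) (map_vec f v) k"
  unfolding replace_col_def by (rule eq_matI) (use assms in auto)

lemma cramer_int:
  assumes A: "A \<in> carrier_mat m n" and S: "S \<subseteq> {..<m}" and J: "J \<subseteq> {..<n}"
    and c: "card S = card J"
    and y: "y \<in> carrier_vec m" and zero: "\<forall>i<m. i \<notin> S \<longrightarrow> y $ i = 0"
    and eq: "\<forall>j<n. (\<Sum>i<m. real_of_int (A$$(i,j)) * y$i) = real_of_int (w$j)"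
    and i: "i \<in> S"
  shows "\<exists>N::int. y$i * real_of_int (det (submatrix A S J)) = real_of_int N"
proof -
  define s where "s = card S"
  have fS: "finite S" using S finite_subset by blast
  have fJ: "finite J" using J finite_subset by blast
  have carr: "submatrix A S J \<in> carrier_mat s s" using submatrix_facts(1)[OF A S J] c s_def by simp
  define M where "M = transpose_mat (submatrix A S J)"
  have Mc: "M \<in> carrier_mat s s" using carr M_def by simp
  define Q where "Q = map_mat real_of_int M"
  have Qc: "Q \<in> carrier_mat s s" using Mc Q_def by simp
  define x where "x = vec s (\<lambda>t. y $ pick S t)"
  have xc: "x \<in> carrier_vec s" unfolding x_def by simp
  define wJ where "wJ = vec s (\<lambda>r. w $ pick J r)"
  have Qx: "Q *\<^sub>v x = map_vec real_of_int wJ"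
  proof (rule eq_vecI)
    show "dim_vec (Q *\<^sub>v x) = dim_vec (map_vec real_of_int wJ)" using Qc by (simp add: wJ_def)
    fix r assume "r < dim_vec (map_vec real_of_int wJ)"
    then have r: "r < s" by (simp add: wJ_def)
    have pJ: "pick J r < n" using pick_in_set[of r J] r c s_def J by auto
    have "(Q *\<^sub>v x) $ r = (\<Sum>t\<in>{0..<s}. Q $$ (r, t) * x $ t)"
      using Qc xc r by (simp add: scalar_prod_def)
    also have "\<dots> = (\<Sum>t<card S. (\<lambda>i. real_of_int (A $$ (i, pick J r)) * y $ i) (pick S t))"
      using submatrix_facts(2)[OF A S J] r c s_def carr
      by (intro sum.cong) (auto simp: Q_def M_def x_def)
    also have "\<dots> = (\<Sum>i\<in>S. real_of_int (A $$ (i, pick J r)) * y $ i)"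
      by (rule sum_pick[OF fS])
    also have "\<dots> = (\<Sum>i<m. real_of_int (A $$ (i, pick J r)) * y $ i)"
      by (rule sum.mono_neutral_left) (use S zero in auto)
    also have "\<dots> = real_of_int (w $ pick J r)" using eq pJ by simp
    finally show "(Q *\<^sub>v x) $ r = map_vec real_of_int wJ $ r" using r by (simp add: wJ_def)
  qed
  define t where "t = card {a\<in>S. a < i}"
  have t: "t < s" using card_less_pos[OF fS i] t_def s_def by simp
  have pt: "pick S t = i" using pick_card_in_set[OF i] t_def by simp
  have xt: "x $ t = y $ i" using t pt by (simp add: x_def)
  have "det (replace_col Q (Q *\<^sub>v x) t) = x $ t * det Q" by (rule cramer_lemma_mat[OF Qc xc t])
  also have "det Q = real_of_int (det (submatrix A S J))"
    unfolding Q_def of_int_hom.hom_det M_def using det_transpose[OF carr] by simp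
  also have "replace_col Q (Q *\<^sub>v x) t = map_mat real_of_int (replace_col M wJ t)"
  proof -
    have "replace_col Q (Q *\<^sub>v x) t = replace_col Q (map_vec real_of_int wJ) t" by (simp only: Qx)
    also have "\<dots> = map_mat real_of_int (replace_col M wJ t)"
      using replace_col_map[of wJ M real_of_int t] Mc by (simp add: Q_def wJ_def)
    finally show ?thesis .
  qed
  finally have "y $ i * real_of_int (det (submatrix A S J)) = real_of_int (det (replace_col M wJ t))"
    unfolding of_int_hom.hom_det xt by simp
  then show ?thesis by blast
qed

lemma feas_iff:
  assumes A: "A \<in> carrier_mat m n" and w: "w \<in> carrier_vec n"
  shows "dual_feasible A w y \<longleftrightarrow> y \<in> carrier_vec m \<and> (\<forall>i<m. 0 \<le> y$i) \<and>
     (\<forall>j<n. (\<Sum>i<m. real_of_int (A$$(i,j)) * y$i) = real_of_int (w$j))"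
proof -
  have "transpose_mat (map_mat real_of_int A) *\<^sub>v y = map_vec real_of_int w \<longleftrightarrow>
     (\<forall>j<n. (\<Sum>i<m. real_of_int (A$$(i,j)) * y$i) = real_of_int (w$j))" if y: "y \<in> carrier_vec m"
  proof -
    have e: "(transpose_mat (map_mat real_of_int A) *\<^sub>v y) $ j = (\<Sum>i<m. real_of_int (A$$(i,j)) * y$i)"
      if "j < n" for j
      using A y that by (simp add: scalar_prod_def lessThan_atLeast0)
    show ?thesis
    proof
      assume h: "transpose_mat (map_mat real_of_int A) *\<^sub>v y = map_vec real_of_int w"
      show "\<forall>j<n. (\<Sum>i<m. real_of_int (A$$(i,j)) * y$i) = real_of_int (w$j)"
      proof (intro allI impI)
        fix j assume j: "j < n"
        have "(transpose_mat (map_mat real_of_int A) *\<^sub>v y) $ j = map_vec real_of_int w $ j" using h by simp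
        then show "(\<Sum>i<m. real_of_int (A$$(i,j)) * y$i) = real_of_int (w$j)" using e[OF j] j w by simp
      qed
    next
      assume h: "\<forall>j<n. (\<Sum>i<m. real_of_int (A$$(i,j)) * y$i) = real_of_int (w$j)"
      show "transpose_mat (map_mat real_of_int A) *\<^sub>v y = map_vec real_of_int w"
        by (rule eq_vecI) (use A w h e in auto)
    qed
  qed
  then show ?thesis unfolding dual_feasible_def using A by auto
qed

lemma obj_eq:
  assumes "b \<in> carrier_vec m" "y \<in> carrier_vec m"
  shows "map_vec real_of_int b \<bullet> y = (\<Sum>i<m. real_of_int (b$i) * y$i)"
  using assms by (simp add: scalar_prod_def lessThan_atLeast0)

lemma sum_restr:
  assumes "S \<subseteq> {..<m::nat}"
  shows "(\<Sum>i<m. if i\<in>S then g i else 0) = (\<Sum>i\<in>S. g i)"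
proof -
  have "(\<Sum>i<m. if i\<in>S then g i else 0) = sum g ({..<m} \<inter> S)"
    by (rule sum.inter_restrict[symmetric]) simp
  also have "{..<m} \<inter> S = S" using assms by auto
  finally show ?thesis .
qed

lemma sum_supp:
  fixes c y :: "nat \<Rightarrow> real"
  assumes "S \<subseteq> {..<m::nat}" "\<forall>i<m. i \<notin> S \<longrightarrow> y i = 0"
  shows "(\<Sum>i<m. c i * y i) = (\<Sum>i\<in>S. c i * y i)"
proof -
  have "(\<Sum>i<m. c i * y i) = (\<Sum>i<m. if i\<in>S then c i * y i else 0)"
    by (rule sum.cong) (use assms in auto)
  then show ?thesis using sum_restr[OF assms(1)] by simp
qed

lemma shift:
  assumes A: "A \<in> carrier_mat m n" and w: "w \<in> carrier_vec n" and b: "b \<in> carrier_vec m"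
    and feas: "dual_feasible A w y" and S: "S \<subseteq> {..<m}"
    and zero: "\<forall>i<m. i \<notin> S \<longrightarrow> y$i = 0"
    and ker: "\<forall>j<n. (\<Sum>i\<in>S. d i * real_of_int (A$$(i,j))) = 0"
    and nn: "\<forall>i\<in>S. t * d i \<le> y$i"
  shows "dual_feasible A w (vec m (\<lambda>i. if i\<in>S then y$i - t * d i else 0))"
    and "map_vec real_of_int b \<bullet> vec m (\<lambda>i. if i\<in>S then y$i - t * d i else 0)
         = map_vec real_of_int b \<bullet> y - t * (\<Sum>i\<in>S. real_of_int (b$i) * d i)"
proof -
  define y' where "y' = vec m (\<lambda>i. if i\<in>S then y$i - t * d i else 0)"
  have yc: "y \<in> carrier_vec m" and ynn: "\<forall>i<m. 0 \<le> y$i"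
    and yeq: "\<forall>j<n. (\<Sum>i<m. real_of_int (A$$(i,j)) * y$i) = real_of_int (w$j)"
    using feas feas_iff[OF A w] by auto
  have gen: "(\<Sum>i<m. c i * y'$i) = (\<Sum>i<m. c i * y$i) - t * (\<Sum>i\<in>S. c i * d i)" for c
  proof -
    have "(\<Sum>i<m. c i * y'$i) = (\<Sum>i<m. if i\<in>S then c i * (y$i - t * d i) else 0)"
      by (rule sum.cong) (auto simp: y'_def)
    also have "\<dots> = (\<Sum>i\<in>S. c i * (y$i - t * d i))" by (rule sum_restr[OF S])
    also have "\<dots> = (\<Sum>i\<in>S. c i * y$i) - t * (\<Sum>i\<in>S. c i * d i)"
      by (simp add: algebra_simps sum_subtractf sum_distrib_left)
    also have "(\<Sum>i\<in>S. c i * y$i) = (\<Sum>i<m. c i * y$i)"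
      using sum_supp[OF S, of "\<lambda>i. y$i" c] zero by simp
    finally show ?thesis .
  qed
  have "dual_feasible A w y'"
    unfolding feas_iff[OF A w]
  proof (intro conjI allI impI)
    show "y' \<in> carrier_vec m" by (simp add: y'_def)
    fix i assume "i < m"
    then show "0 \<le> y'$i" using nn by (auto simp: y'_def)
  next
    fix j assume j: "j < n"
    have "(\<Sum>i\<in>S. real_of_int (A$$(i,j)) * d i) = 0" using ker j by (simp add: mult.commute)
    then show "(\<Sum>i<m. real_of_int (A$$(i,j)) * y'$i) = real_of_int (w$j)"
      using gen[of "\<lambda>i. real_of_int (A$$(i,j))"] yeq j by simp
  qed
  then show "dual_feasible A w (vec m (\<lambda>i. if i\<in>S then y$i - t * d i else 0))" by (simp add: y'_def)
  have "map_vec real_of_int b \<bullet> y' = map_vec real_of_int b \<bullet> y - t * (\<Sum>i\<in>S. real_of_int (b$i) * d i)"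
    using obj_eq[OF b yc] obj_eq[OF b, of y'] gen[of "\<lambda>i. real_of_int (b$i)"] by (simp add: y'_def)
  then show "map_vec real_of_int b \<bullet> vec m (\<lambda>i. if i\<in>S then y$i - t * d i else 0)
         = map_vec real_of_int b \<bullet> y - t * (\<Sum>i\<in>S. real_of_int (b$i) * d i)" by (simp add: y'_def)
qed

lemma step1:
  assumes A: "A \<in> carrier_mat m n" and w: "w \<in> carrier_vec n" and b: "b \<in> carrier_vec m"
    and opt: "dual_optimal A b w y"
    and minimal: "\<forall>y'. dual_optimal A b w y' \<longrightarrow> card {i. i<m \<and> y$i \<noteq> 0} \<le> card {i. i<m \<and> y'$i \<noteq> 0}"
    and S_def: "S = {i. i<m \<and> y$i \<noteq> 0}"
  shows "\<forall>u. (\<forall>j<n. (\<Sum>i\<in>S. u i * real_of_int (A$$(i,j))) = 0) \<longrightarrow> (\<forall>i\<in>S. u i = 0)"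
proof (intro allI impI ballI, rule ccontr)
  fix u i0
  assume ker: "\<forall>j<n. (\<Sum>i\<in>S. u i * real_of_int (A$$(i,j))) = 0" and i0: "i0 \<in> S" and ui0: "u i0 \<noteq> 0"
  have feas: "dual_feasible A w y" and optim: "\<And>y'. dual_feasible A w y' \<Longrightarrow>
      map_vec real_of_int b \<bullet> y \<le> map_vec real_of_int b \<bullet> y'"
    using opt unfolding dual_optimal_def by auto
  have yc: "y \<in> carrier_vec m" and ynn: "\<forall>i<m. 0 \<le> y$i"
    using feas feas_iff[OF A w] by auto
  have S: "S \<subseteq> {..<m}" using S_def by auto
  have fS: "finite S" using S finite_subset by blast
  have zero: "\<forall>i<m. i \<notin> S \<longrightarrow> y$i = 0" using S_def by auto
  have ypos: "\<forall>i\<in>S. 0 < y$i" using S_def ynn by force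
  let ?obj = "\<lambda>z. map_vec real_of_int b \<bullet> z"
  define c where "c = (\<lambda>d. \<Sum>i\<in>S. real_of_int (b$i) * d i)"
  have Sne: "S \<noteq> {}" using i0 by auto
  define \<delta> where "\<delta> = Min ((\<lambda>i. y$i / (\<bar>u i\<bar> + 1)) ` S)"
  have \<delta>pos: "0 < \<delta>" unfolding \<delta>_def using fS Sne ypos
    by (subst Min_gr_iff) (auto intro!: divide_pos_pos)
  have \<delta>le: "\<delta> * (\<bar>u i\<bar> + 1) \<le> y$i" if "i \<in> S" for i
  proof -
    have "\<delta> \<le> y$i / (\<bar>u i\<bar> + 1)" unfolding \<delta>_def using fS that by (intro Min_le) auto
    then show ?thesis by (simp add: pos_le_divide_eq add_pos_nonneg)
  qed
  have small: "\<forall>i\<in>S. t * u i \<le> y$i" if "\<bar>t\<bar> = \<delta>" for t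
  proof
    fix i assume i: "i \<in> S"
    have "t * u i \<le> \<bar>t * u i\<bar>" by simp
    also have "\<dots> = \<delta> * \<bar>u i\<bar>" using that by (simp add: abs_mult)
    also have "\<dots> \<le> \<delta> * (\<bar>u i\<bar> + 1)" using \<delta>pos by simp
    also have "\<dots> \<le> y$i" using \<delta>le[OF i] .
    finally show "t * u i \<le> y$i" .
  qed
  have c0: "c u = 0"
  proof -
    have "?obj y \<le> ?obj y - t * c u" if "\<bar>t\<bar> = \<delta>" for t
      using optim[OF shift(1)[OF A w b feas S zero ker small[OF that]]]
        shift(2)[OF A w b feas S zero ker small[OF that]] by (simp add: c_def)
    from this[of \<delta>] this[of "-\<delta>"] \<delta>pos have "\<delta> * c u \<le> 0" "- \<delta> * c u \<le> 0" by auto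
    then have "\<delta> * c u = 0" by simp
    then show ?thesis using \<delta>pos by simp
  qed
  define v where "v = (if u i0 > 0 then u else (\<lambda>i. - u i))"
  have vi0: "v i0 > 0" using ui0 by (auto simp: v_def)
  have kerv: "\<forall>j<n. (\<Sum>i\<in>S. v i * real_of_int (A$$(i,j))) = 0"
    using ker by (auto simp: v_def sum_negf)
  have cv: "c v = 0" using c0 by (auto simp: v_def c_def sum_negf)
  define T where "T = {i\<in>S. v i > 0}"
  have fT: "finite T" using fS T_def by simp
  have i0T: "i0 \<in> T" using i0 vi0 T_def by simp
  define ts where "ts = Min ((\<lambda>i. y$i / v i) ` T)"
  have "ts \<in> (\<lambda>i. y$i / v i) ` T" unfolding ts_def using fT i0T by (intro Min_in) auto
  then obtain i1 where i1: "i1 \<in> T" "ts = y$i1 / v i1" by blast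
  have tspos: "0 \<le> ts" using i1 ypos T_def by auto
  have nn: "\<forall>i\<in>S. ts * v i \<le> y$i"
  proof
    fix i assume i: "i \<in> S"
    show "ts * v i \<le> y$i"
    proof (cases "v i > 0")
      case True
      then have "i \<in> T" using i T_def by simp
      then have "ts \<le> y$i / v i" unfolding ts_def using fT by (intro Min_le) auto
      then show ?thesis using True by (simp add: pos_le_divide_eq)
    next
      case False
      then have "ts * v i \<le> 0" using tspos by (simp add: mult_nonneg_nonpos)
      then show ?thesis using ypos i by force
    qed
  qed
  define y' where "y' = vec m (\<lambda>i. if i\<in>S then y$i - ts * v i else 0)"
  have feas': "dual_feasible A w y'" unfolding y'_def by (rule shift(1)[OF A w b feas S zero kerv nn])
  have obj': "?obj y' = ?obj y"
    unfolding y'_def using shift(2)[OF A w b feas S zero kerv nn] cv by (simp add: c_def)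
  have opt': "dual_optimal A b w y'"
    unfolding dual_optimal_def using feas' obj' optim by simp
  have i1S: "i1 \<in> S" and vi1: "v i1 > 0" using i1 T_def by auto
  have "{i. i<m \<and> y'$i \<noteq> 0} \<subseteq> S - {i1}"
    using i1S vi1 i1(2) by (auto simp: y'_def split: if_splits)
  then have "card {i. i<m \<and> y'$i \<noteq> 0} \<le> card (S - {i1})" using fS by (intro card_mono) auto
  also have "\<dots> < card S" using fS i1S by (rule card_Diff1_less)
  finally show False using minimal opt' S_def by force
qed

theorem theorem1p7:
  fixes p :: int and A :: "int mat" and b :: "int vec" and m n :: nat
  assumes "prime p"
    and "A \<in> carrier_mat m n"
    and "b \<in> carrier_vec m"
    and "subdets_p_power p A"
  shows "totally_dual_p_adic p A b"
  unfolding totally_dual_p_adic_def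
proof (intro ballI impI)
  note A = assms(2) and b = assms(3)
  have p0: "p \<noteq> 0" using assms(1) by auto
  fix w :: "int vec" assume "w \<in> carrier_vec (dim_col A)"
  then have w: "w \<in> carrier_vec n" using A by simp
  assume ex: "\<exists>y. dual_optimal A b w y"
  define P where "P = (\<lambda>k. \<exists>y. dual_optimal A b w y \<and> card {i. i<m \<and> y$i \<noteq> 0} = k)"
  have "\<exists>k. P k" using ex P_def by blast
  then have "P (LEAST k. P k)" by (rule LeastI_ex)
  then obtain y where opt: "dual_optimal A b w y" and cy: "card {i. i<m \<and> y$i \<noteq> 0} = (LEAST k. P k)"
    unfolding P_def by blast
  have minimal: "\<forall>y'. dual_optimal A b w y' \<longrightarrow> card {i. i<m \<and> y$i \<noteq> 0} \<le> card {i. i<m \<and> y'$i \<noteq> 0}"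
    unfolding cy using P_def by (auto intro: Least_le)
  define S where "S = {i. i<m \<and> y$i \<noteq> 0}"
  have S: "S \<subseteq> {..<m}" using S_def by auto
  have fS: "finite S" using S finite_subset by blast
  have feas: "dual_feasible A w y" using opt unfolding dual_optimal_def by auto
  have yc: "y \<in> carrier_vec m"
    and yeq: "\<forall>j<n. (\<Sum>i<m. real_of_int (A$$(i,j)) * y$i) = real_of_int (w$j)"
    using feas feas_iff[OF A w] by auto
  have zero: "\<forall>i<m. i \<notin> S \<longrightarrow> y$i = 0" using S_def by auto
  have indep: "\<forall>u. (\<forall>j\<in>{..<n}. (\<Sum>i\<in>S. u i * real_of_int (A$$(i,j))) = 0) \<longrightarrow> (\<forall>i\<in>S. u i = 0)"
    using step1[OF A w b opt minimal S_def] by simp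
  obtain J where J: "J \<subseteq> {..<n}" "card J = card S"
    and Q: "\<forall>v. (\<forall>i\<in>S. (\<Sum>j\<in>J. real_of_int (A$$(i,j)) * v j) = 0) \<longrightarrow> (\<forall>j\<in>J. v j = 0)"
    using find_J[OF fS _ indep] by blast
  have dnz: "det (submatrix A S J) \<noteq> 0" using det_nonzero[OF A S J(1) J(2)[symmetric] Q] .
  have "S \<subseteq> {0..<dim_row A}" "J \<subseteq> {0..<dim_col A}" "card S = card J" using S J A by auto
  then obtain k where k: "det (submatrix A S J) = p ^ k \<or> det (submatrix A S J) = - (p ^ k)"
    using assms(4) dnz unfolding subdets_p_power_def Let_def by blast
  have pk: "real_of_int p ^ k \<noteq> 0" using p0 by simp
  have "p_adic_vec p y"
    unfolding p_adic_vec_def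
  proof (intro allI impI)
    fix i assume "i < dim_vec y"
    then have im: "i < m" using yc by simp
    show "p_adic p (y $ i)"
    proof (cases "i \<in> S")
      case True
      obtain N where N: "y$i * real_of_int (det (submatrix A S J)) = real_of_int N"
        using cramer_int[OF A S J(1) J(2)[symmetric] yc zero yeq True] by blast
      from k show ?thesis
      proof
        assume "det (submatrix A S J) = p ^ k"
        then have "y$i * real_of_int p ^ k = real_of_int N" using N by simp
        then have "y$i = real_of_int N / real_of_int p ^ k" using pk by (simp add: eq_divide_eq)
        then show ?thesis unfolding p_adic_def by blast
      next
        assume "det (submatrix A S J) = - (p ^ k)"
        then have "y$i * real_of_int p ^ k = real_of_int (- N)" using N by simp
        then have "y$i = real_of_int (-N) / real_of_int p ^ k" using pk by (simp only: eq_divide_eq) simp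
        then show ?thesis unfolding p_adic_def by blast
      qed
    next
      case False
      then have "y$i = real_of_int 0 / real_of_int p ^ 0" using zero im by simp
      then show ?thesis unfolding p_adic_def by blast
    qed
  qed
  then show "\<exists>y. dual_optimal A b w y \<and> p_adic_vec p y" using opt by blast
qed

end
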